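(* Let $X$ be a real Banach space, $I=\{1,\ldots,m\}$, $J=\{1,\ldots,l\}$, $f_i,g_j\colon X\to\mathbb{R}$, $M=\{x\in X\mid f_i(x)=0\ \forall i\in I,\ g_j(x)\le0\ \forall j\in J\}$, $\overline{x}\in M$, $J(\overline{x})=\{j\in J\mid g_j(\overline{x})=0\}$, and let $f_i$, $i\in I$, and $g_j$, $j\in J(\overline{x})$, be quasidifferentiable at $\overline{x}$ with given quasidifferentials. Consider the conditions $$[\mathscr{D} f_i(\overline{x})]^+\cap\operatorname{cl}^*\operatorname{lin}\{[\mathscr{D} f_k(\overline{x})]^+\mid k\ne i\}=\emptyset\quad\forall i\in I,\qquad(\mathrm{A})$$ $$\operatorname{co}\{[\mathscr{D} g_j(\overline{x})]^+\mid j\in J(\overline{x})\}\cap\operatorname{cl}^*\operatorname{lin}\{[\mathscr{D} f_i(\overline{x})]^+\mid i\in I\}=\emptyset.\qquad(\mathrm{B})$$ Call "condition (Q) for given $x_i^*,y_i^*,z_j^*$" the conjunction of: (1) for any $i\in I$ there exists $v_i\in X$ with $s(\underline{\partial} f_i(\overline{x})+y_i^*,v_i)<0$ and, for all $k\ne i$, $s(\underline{\partial} f_k(\overline{x})+y_k^*,v_i)\le0$ and $s(-x_k^*-\overline{\partial} f_k(\overline{x}),v_i)\le0$; (2) for any $i\in I$ there exists $w_i\in X$ with $s(-x_i^*-\overline{\partial} f_i(\overline{x}),w_i)<0$ and, for all $k\ne i$, $s(-x_k^*-\overline{\partial} f_k(\overline{x}),w_i)\le0$ and $s(\underline{\partial}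 f_k(\overline{x})+y_k^*,w_i)\le0$; (3) there exists $v_0\in X$ with $s(\underline{\partial} g_j(\overline{x})+z_j^*,v_0)<0$ for all $j\in J(\overline{x})$ and $s(\underline{\partial} f_i(\overline{x})+y_i^*,v_0)\le0$, $s(-x_i^*-\overline{\partial} f_i(\overline{x}),v_0)\le0$ for all $i\in I$. Then: (a) if (A) and (B) hold, then condition (Q) holds for all $x_i^*\in\underline{\partial} f_i(\overline{x})$, $y_i^*\in\overline{\partial} f_i(\overline{x})$, $i\in I$, and $z_j^*\in\overline{\partial} g_j(\overline{x})$, $j\in J(\overline{x})$. (b) If the linear spans appearing in (A) and (B) are weak$^*$ closed (in particular, if $X$ is finite dimensional), then conversely, validity of (Q) for all such $x_i^*,y_i^*,z_j^*$ implies (A) and (B). (c) If the span in (A) is weak$^*$ closed for every $i\in I$, then (A) and (B) hold if and only if the Mangasarian–Fromovitz constraint qualification in terms of quasidifferentials holds at $\overline{x}$, i.e. the sets $[\mathscr{D} f_i(\overline{x})]^+$, $i\in I$, are strongly linearly independent and there exists $v_0\in X$ such that $\langle x^*,v_0\rangle=0$ for all $x^*\in[\mathscr{D} f_i(\overline{x})]^+$, $i\in I$, and $\langle x^*,v_0\rangle<0$ for all $x^*\in[\mathscr{D} g_j(\overline{x})]^+$, $j\in J(\overline{x})$.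
   Context: $X^*$ is the dual with pairing $\langle\cdot,\cdot\rangle$; $\operatorname{cl}^*$ is weak$^*$ closure. $f$ is quasidifferentiable at $x$ if the directional derivative $f'(x,v)=\lim_{\alpha\to+0}(f(x+\alpha v)-f(x))/\alpha$ exists finitely for all $v$ and there is a pair $\mathscr{D} f(x)=[\underline{\partial} f(x),\overline{\partial} f(x)]$ of convex weak$^*$ compact subsets of $X^*$ with $f'(x,v)=\max_{x^*\in\underline{\partial} f(x)}\langle x^*,v\rangle+\min_{y^*\in\overline{\partial} f(x)}\langle y^*,v\rangle$ for all $v$; a specific such pair is fixed for each function. The quasidifferential sum is $[\mathscr{D} f(x)]^+=\underline{\partial} f(x)+\overline{\partial} f(x)$ (Minkowski sum). $s(C,v)=\sup_{x^*\in C}\langle x^*,v\rangle$. $\operatorname{lin}$ denotes linear span and $\operatorname{co}$ convex hull of the union of the listed sets. Sets $A_1,\ldots,A_m$ in a real vector space are strongly linearly independent if $A_i\cap\operatorname{lin}\{A_k\mid k\ne i\}=\emptyset$ for all $i$. *)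

theory Defs
  imports "HOL-Analysis.Analysis"
begin

definition wstar_topology :: "('a::real_normed_vector \<Rightarrow>\<^sub>L real) topology" where
  "wstar_topology =
     topology_generated_by {{\<phi>. blinfun_apply \<phi> v \<in> U} | v U. open (U::real set)}"

definition supp :: "('a::real_normed_vector \<Rightarrow>\<^sub>L real) set \<Rightarrow> 'a \<Rightarrow> real" where
  "supp C v = (SUP \<phi>\<in>C. blinfun_apply \<phi> v)"

definition msum :: "('a::real_normed_vector \<Rightarrow>\<^sub>L real) set \<Rightarrow> ('a \<Rightarrow>\<^sub>L real) set
    \<Rightarrow> ('a \<Rightarrow>\<^sub>L real) set" where
  "msum A B = {a + b | a b. a \<in> A \<and> b \<in> B}"

definition is_quasidiff ::
  "('a::real_normed_vector \<Rightarrow> real) \<Rightarrow> 'a \<Rightarrow> ('a \<Rightarrow>\<^sub>L real) set \<Rightarrow> ('a \<Rightarrow>\<^sub>L real) set \<Rightarrow> bool" where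
  "is_quasidiff f x L U \<longleftrightarrow>
     L \<noteq> {} \<and> U \<noteq> {} \<and> convex L \<and> convex U \<and>
     compactin wstar_topology L \<and> compactin wstar_topology U \<and>
     (\<forall>v. ((\<lambda>\<alpha>. (f (x + \<alpha> *\<^sub>R v) - f x) / \<alpha>) \<longlongrightarrow>
             (SUP \<phi>\<in>L. blinfun_apply \<phi> v) + (INF \<psi>\<in>U. blinfun_apply \<psi> v)) (at_right 0))"

end

theory Submission
  imports Defs
begin

definition sublin :: "(('b \<Rightarrow> real) \<Rightarrow> real) \<Rightarrow> bool" where
  "sublin p \<longleftrightarrow> (\<forall>x y. p (\<lambda>v. x v + y v) \<le> p x + p y) \<and> (\<forall>c x. c > 0 \<longrightarrow> p (\<lambda>v. c * x v) \<le> c * p x)"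

lemma sublin_add: "sublin p \<Longrightarrow> p (\<lambda>v. x v + y v) \<le> p x + p y"
  unfolding sublin_def by blast

lemma sublin_smul: "sublin p \<Longrightarrow> c > 0 \<Longrightarrow> p (\<lambda>v. c * x v) \<le> c * p x"
  unfolding sublin_def by blast

lemma sublin_zero:
  assumes "sublin p" shows "p (\<lambda>v. 0) = 0"
proof -
  have a: "p (\<lambda>v. 0) \<le> p (\<lambda>v. 0) + p (\<lambda>v. 0)" using sublin_add[OF assms, of "\<lambda>v. 0" "\<lambda>v. 0"]
    by simp
  have b: "p (\<lambda>v. (1/2) * 0) \<le> (1/2) * p (\<lambda>v. 0)" using sublin_smul[OF assms, of "1/2" "\<lambda>v. 0"] by simp
  show ?thesis using a b by simp
qed

lemma sublin_hom:
  assumes "sublin p" "c > 0" shows "p (\<lambda>v. c * x v) = c * p x"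
proof -
  have 1: "p (\<lambda>v. c * x v) \<le> c * p x" using sublin_smul[OF assms(1,2)] by blast
  have "p (\<lambda>v. (1/c) * (c * x v)) \<le> (1/c) * p (\<lambda>v. c * x v)"
    using sublin_smul[OF assms(1), of "1/c" "\<lambda>v. c * x v"] assms(2) by simp
  then have "p x \<le> (1/c) * p (\<lambda>v. c * x v)" using assms(2) by simp
  then have "c * p x \<le> p (\<lambda>v. c * x v)" using assms(2) by (simp add: field_simps)
  then show ?thesis using 1 by linarith
qed

lemma sublin_line:
  assumes "sublin p" shows "s * p e \<le> p (\<lambda>v. s * e v)"
proof (cases "s > 0")
  case True then show ?thesis using sublin_hom[OF assms] by simp
next
  case False
  show ?thesis
  proof (cases "s = 0")
    case True then show ?thesis using sublin_zero[OF assms] by simp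
  next
    case False
    then have "-s > 0" using \<open>\<not> s > 0\<close> by simp
    have "p (\<lambda>v. s * e v + (-s) * e v) \<le> p (\<lambda>v. s * e v) + p (\<lambda>v. (-s) * e v)"
      using sublin_add[OF assms, of "\<lambda>v. s * e v" "\<lambda>v. (-s) * e v"] by simp
    moreover have "p (\<lambda>v. (-s) * e v) = (-s) * p e" using sublin_hom[OF assms \<open>-s > 0\<close>] by simp
    moreover have "p (\<lambda>v. s * e v + (-s) * e v) = 0" using sublin_zero[OF assms] by simp
    ultimately show ?thesis by simp
  qed
qed

lemma finite_HB:
  assumes "finite F"
  shows "\<And>p. sublin p \<Longrightarrow> (\<forall>x y. (\<forall>v\<in>F. x v = y v) \<longrightarrow> p x = p y) \<Longrightarrow>
     \<exists>lam. \<forall>x. (\<Sum>v\<in>F. lam v * x v) \<le> p x"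
  using assms
proof (induction F rule: finite_induct)
  case empty
  have "p x = p (\<lambda>v. 0)" for x using empty(2) by blast
  then show ?case using sublin_zero[OF empty(1)] by simp
next
  case (insert a G)
  note sp = insert.prems(1) and dep = insert.prems(2)
  define e where "e = (\<lambda>v::'a. if v = a then (1::real) else 0)"
  define c where "c = p e"
  define h where "h = (\<lambda>y s. p (y(a := s)) - c * s)"
  define q where "q = (\<lambda>y. INF s. h y s)"
  have line: "p (\<lambda>v. s * e v) \<ge> s * c" for s using sublin_line[OF sp] c_def by simp
  have lower: "h y s \<ge> - p (\<lambda>v. - (y(a:=0)) v)" for y s
  proof -
    have eq: "y(a := s) = (\<lambda>v. (y(a:=0)) v + s * e v)" by (auto simp: e_def)
    have "p (\<lambda>v. s * e v) = p (\<lambda>v. (y(a := s)) v + (- (y(a:=0)) v))"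
      by (rule arg_cong[where f=p]) (auto simp: e_def)
    also have "\<dots> \<le> p (y(a:=s)) + p (\<lambda>v. - (y(a:=0)) v)" using sublin_add[OF sp, of "y(a:=s)" "\<lambda>v. - (y(a:=0)) v"] by (simp only: diff_conv_add_uminus)
    moreover have "s * c = c * s" by simp
    ultimately show ?thesis using line[of s] unfolding h_def by linarith
  qed
  have bdd: "bdd_below (range (h y))" for y using lower by (intro bdd_belowI2) auto
  have qle: "q y \<le> h y s" for y s unfolding q_def by (rule cINF_lower[OF bdd]) simp
  have qge: "(\<And>s. r \<le> h y s) \<Longrightarrow> r \<le> q y" for r y unfolding q_def by (rule cINF_greatest) auto
  have "sublin q"
    unfolding sublin_def
  proof (intro conjI allI impI)
    fix x y
    have A: "q (\<lambda>v. x v + y v) \<le> h x s1 + h y s2" for s1 s2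
    proof -
      have "q (\<lambda>v. x v + y v) \<le> h (\<lambda>v. x v + y v) (s1 + s2)" by (rule qle)
      also have "h (\<lambda>v. x v + y v) (s1 + s2) = p (\<lambda>v. (x(a:=s1)) v + (y(a:=s2)) v) - c * (s1 + s2)"
        unfolding h_def by (rule arg_cong[where f="\<lambda>t. p t - c * (s1 + s2)"]) auto
      also have "\<dots> \<le> h x s1 + h y s2" unfolding h_def
        using sublin_add[OF sp, of "x(a:=s1)" "y(a:=s2)"] by (simp add: distrib_left del: fun_upd_apply)
      finally show ?thesis .
    qed
    have B: "q (\<lambda>v. x v + y v) - h y s2 \<le> q x" for s2
    proof -
      have "\<And>s1. q (\<lambda>v. x v + y v) - h y s2 \<le> h x s1" using A[of _ s2]
        by (metis add.commute diff_le_eq) 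
      then show ?thesis by (rule qge)
    qed
    have "q (\<lambda>v. x v + y v) - q x \<le> q y"
    proof -
      have "\<And>s2. q (\<lambda>v. x v + y v) - q x \<le> h y s2" using B
        by (metis diff_le_eq add.commute le_diff_eq)
      then show ?thesis by (rule qge)
    qed
    then show "q (\<lambda>v. x v + y v) \<le> q x + q y" by simp
  next
    fix t :: real and x assume "t > 0"
    have "q (\<lambda>v. t * x v) \<le> t * h x s" for s
    proof -
      have "q (\<lambda>v. t * x v) \<le> h (\<lambda>v. t * x v) (t * s)" by (rule qle)
      also have "h (\<lambda>v. t * x v) (t * s) = p (\<lambda>v. t * (x(a:=s)) v) - c * (t * s)"
        unfolding h_def by (rule arg_cong[where f="\<lambda>z. p z - c * (t * s)"]) auto
      also have "\<dots> = t * h x s" unfolding h_def using sublin_hom[OF sp \<open>t>0\<close>, of "x(a:=s)"]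
        by (simp add: algebra_simps del: fun_upd_apply)
      finally show ?thesis .
    qed
    then have "q (\<lambda>v. t * x v) / t \<le> q x" using \<open>t > 0\<close>
      by (intro qge) (simp add: divide_le_eq mult.commute)
    then show "q (\<lambda>v. t * x v) \<le> t * q x" using \<open>t > 0\<close> by (simp add: divide_le_eq mult.commute)
  qed
  moreover have "\<forall>x y. (\<forall>v\<in>G. x v = y v) \<longrightarrow> q x = q y"
  proof (intro allI impI)
    fix x y :: "'a \<Rightarrow> real" assume xy: "\<forall>v\<in>G. x v = y v"
    have "p (x(a:=s)) = p (y(a:=s))" for s
      using dep xy by (metis fun_upd_apply insert_iff)
    then have "h x = h y" unfolding h_def by (intro ext) simp
    then show "q x = q y" unfolding q_def by simp
  qed
  ultimately obtain lam where lam: "\<And>x. (\<Sum>v\<in>G. lam v * x v) \<le> q x" using insert.IH by blast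
  show ?case
  proof (intro exI allI)
    fix x
    have "(\<Sum>v\<in>insert a G. (lam(a := c)) v * x v) = c * x a + (\<Sum>v\<in>G. lam v * x v)"
    proof -
      have "(\<Sum>v\<in>insert a G. (lam(a := c)) v * x v) = (lam(a := c)) a * x a + (\<Sum>v\<in>G. (lam(a := c)) v * x v)"
        using insert.hyps by (simp add: sum.insert)
      moreover have "(\<Sum>v\<in>G. (lam(a := c)) v * x v) = (\<Sum>v\<in>G. lam v * x v)"
        using insert.hyps(2) by (intro sum.cong) auto
      ultimately show ?thesis by simp
    qed
    also have "\<dots> \<le> c * x a + h x (x a)" using lam[of x] qle[of x "x a"] by simp
    also have "\<dots> = p x" unfolding h_def by simp
    finally show "(\<Sum>v\<in>insert a G. (lam(a := c)) v * x v) \<le> p x" .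
  qed
qed

abbreviation "WS \<equiv> wstar_topology"

lemma W_topspace [simp]: "topspace (wstar_topology :: ('a::real_normed_vector \<Rightarrow>\<^sub>L real) topology) = UNIV"
proof -
  have "{\<phi>::'a \<Rightarrow>\<^sub>L real. blinfun_apply \<phi> 0 \<in> UNIV} \<in> {{\<phi>. blinfun_apply \<phi> v \<in> U} | v U. open (U::real set)}"
    by blast
  then show ?thesis unfolding wstar_topology_def by auto
qed

lemma W_open_sub: "open U \<Longrightarrow> openin wstar_topology {\<phi>. blinfun_apply \<phi> v \<in> U}"
  unfolding wstar_topology_def by (rule topology_generated_by_Basis) blast

lemma W_cont_into:
  fixes f :: "'b \<Rightarrow> ('a::real_normed_vector \<Rightarrow>\<^sub>L real)"
  assumes "\<And>v. continuous_map X euclideanreal (\<lambda>x. blinfun_apply (f x) v)"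
  shows "continuous_map X wstar_topology f"
  unfolding continuous_map_def
proof (intro conjI allI impI)
  show "f \<in> topspace X \<rightarrow> topspace wstar_topology" by simp
  fix U :: "('a \<Rightarrow>\<^sub>L real) set" assume "openin wstar_topology U"
  then have "generate_topology_on {{\<phi>::'a \<Rightarrow>\<^sub>L real. blinfun_apply \<phi> v \<in> V} | v V. open (V::real set)} U"
    unfolding wstar_topology_def by (rule openin_topology_generated_by)
  then show "openin X {x \<in> topspace X. f x \<in> U}"
  proof (induction rule: generate_topology_on.induct)
    case Empty then show ?case by simp
  next
    case (Int a b)
    have "{x \<in> topspace X. f x \<in> a \<inter> b} = {x \<in> topspace X. f x \<in> a} \<inter> {x \<in> topspace X. f x \<in> b}" by auto
    then show ?case using Int by auto
  next
    case (UN K)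
    have "{x \<in> topspace X. f x \<in> \<Union>K} = (\<Union>k\<in>K. {x \<in> topspace X. f x \<in> k})" by auto
    then show ?case using UN by auto
  next
    case (Basis s)
    then obtain v U where s: "s = {\<phi>. blinfun_apply \<phi> v \<in> U}" "open U" by blast
    have "{x \<in> topspace X. f x \<in> s} = {x \<in> topspace X. blinfun_apply (f x) v \<in> U}" using s by auto
    then show ?case using assms[of v] s(2) unfolding continuous_map_def by auto
  qed
qed

lemma W_eval: "continuous_map wstar_topology euclideanreal (\<lambda>\<phi>. blinfun_apply \<phi> v)"
  unfolding continuous_map_def
  by (auto intro: W_open_sub)

lemma W_eval_comp: "continuous_map X wstar_topology g \<Longrightarrow>
   continuous_map X euclideanreal (\<lambda>x. blinfun_apply (g x) v)"
  using continuous_map_compose[OF _ W_eval, of X g v] by (simp add: o_def)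

lemma W_nbhd:
  fixes U :: "('a::real_normed_vector \<Rightarrow>\<^sub>L real) set"
  assumes "openin wstar_topology U" "k \<in> U"
  shows "\<exists>F e. finite F \<and> e > 0 \<and> {\<phi>. \<forall>v\<in>F. \<bar>blinfun_apply \<phi> v - blinfun_apply k v\<bar> < e} \<subseteq> U"
proof -
  have "generate_topology_on {{\<phi>::'a \<Rightarrow>\<^sub>L real. blinfun_apply \<phi> v \<in> V} | v V. open (V::real set)} U"
    using assms(1) unfolding wstar_topology_def by (rule openin_topology_generated_by)
  then show ?thesis using assms(2)
  proof (induction arbitrary: k rule: generate_topology_on.induct)
    case Empty then show ?case by simp
  next
    case (Int a b)
    have ka: "k \<in> a" "k \<in> b" using Int.prems by auto
    obtain F1 e1 where 1: "finite F1" "e1 > 0" "{\<phi>. \<forall>v\<in>F1. \<bar>blinfun_apply \<phi> v - blinfun_apply k v\<bar> < e1} \<subseteq> a"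
      using Int.IH(1)[OF ka(1)] by blast
    obtain F2 e2 where 2: "finite F2" "e2 > 0" "{\<phi>. \<forall>v\<in>F2. \<bar>blinfun_apply \<phi> v - blinfun_apply k v\<bar> < e2} \<subseteq> b"
      using Int.IH(2)[OF ka(2)] by blast
    have s1: "{\<phi>. \<forall>v\<in>F1 \<union> F2. \<bar>blinfun_apply \<phi> v - blinfun_apply k v\<bar> < min e1 e2} \<subseteq>
       {\<phi>. \<forall>v\<in>F1. \<bar>blinfun_apply \<phi> v - blinfun_apply k v\<bar> < e1}" by auto
    have s2: "{\<phi>. \<forall>v\<in>F1 \<union> F2. \<bar>blinfun_apply \<phi> v - blinfun_apply k v\<bar> < min e1 e2} \<subseteq>
       {\<phi>. \<forall>v\<in>F2. \<bar>blinfun_apply \<phi> v - blinfun_apply k v\<bar> < e2}" by auto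
    show ?case
    proof (intro exI conjI)
      show "finite (F1 \<union> F2)" using 1 2 by simp
      show "min e1 e2 > 0" using 1 2 by simp
      show "{\<phi>. \<forall>v\<in>F1 \<union> F2. \<bar>blinfun_apply \<phi> v - blinfun_apply k v\<bar> < min e1 e2} \<subseteq> a \<inter> b"
        using s1 s2 1(3) 2(3) by blast
    qed
  next
    case (UN K)
    then obtain k0 where k0: "k0 \<in> K" "k \<in> k0" by blast
    obtain F e where "finite F" "e > 0" "{\<phi>. \<forall>v\<in>F. \<bar>blinfun_apply \<phi> v - blinfun_apply k v\<bar> < e} \<subseteq> k0"
      using UN.IH[OF k0] by blast
    then show ?case using k0(1) by blast
  next
    case (Basis s)
    then obtain v U where s: "s = {\<phi>. blinfun_apply \<phi> v \<in> U}" "open U" by blast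
    then have "blinfun_apply k v \<in> U" using Basis by auto
    then obtain e where e: "e > 0" "ball (blinfun_apply k v) e \<subseteq> U" using s(2) open_contains_ball by blast
    show ?case
    proof (intro exI conjI)
      show "finite {v}" by simp
      show "{\<phi>. \<forall>w\<in>{v}. \<bar>blinfun_apply \<phi> w - blinfun_apply k w\<bar> < e} \<subseteq> s"
        using e s by (auto simp: dist_real_def subset_iff)
    qed (use e in auto)
  qed
qed

lemma W_box_open:
  assumes "finite F"
  shows "openin wstar_topology {\<phi>. \<forall>v\<in>F. \<bar>blinfun_apply \<phi> v - blinfun_apply k v\<bar> < e}"
  using assms
proof (induction F rule: finite_induct)
  case empty
  then show ?case using openin_topspace[of wstar_topology] by simp
next
  case (insert a F)
  have "{\<phi>. \<forall>v\<in>insert a F. \<bar>blinfun_apply \<phi> v - blinfun_apply k v\<bar> < e} =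
     {\<phi>. blinfun_apply \<phi> a \<in> {blinfun_apply k a - e <..< blinfun_apply k a + e}} \<inter>
     {\<phi>. \<forall>v\<in>F. \<bar>blinfun_apply \<phi> v - blinfun_apply k v\<bar> < e}"
    by (auto simp: abs_less_iff)
  then show ?case using insert W_open_sub[of "{blinfun_apply k a - e <..< blinfun_apply k a + e}" a]
    by (simp add: openin_Int)
qed

lemma W_bdd:
  assumes "compactin wstar_topology K"
  shows "bdd_above ((\<lambda>\<phi>. blinfun_apply \<phi> v) ` K)" "bdd_below ((\<lambda>\<phi>. blinfun_apply \<phi> v) ` K)"
proof -
  have "compactin euclideanreal ((\<lambda>\<phi>. blinfun_apply \<phi> v) ` K)"
    by (rule image_compactin[OF assms W_eval])
  then have "bounded ((\<lambda>\<phi>. blinfun_apply \<phi> v) ` K)" by (simp add: compact_imp_bounded)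
  then show "bdd_above ((\<lambda>\<phi>. blinfun_apply \<phi> v) ` K)" "bdd_below ((\<lambda>\<phi>. blinfun_apply \<phi> v) ` K)"
    by (auto simp: bounded_imp_bdd_above bounded_imp_bdd_below)
qed

lemma W_closed_ker: "closedin wstar_topology {\<phi>. blinfun_apply \<phi> v = 0}"
proof -
  have "topspace wstar_topology - {\<phi>. blinfun_apply \<phi> v = 0} = {\<phi>. blinfun_apply \<phi> v \<in> - {0}}" by auto
  then show ?thesis unfolding closedin_def using W_open_sub[of "-{0}" v] by auto
qed

lemma W_affine_compact:
  assumes "compactin wstar_topology K"
  shows "compactin wstar_topology ((\<lambda>\<phi>. c *\<^sub>R \<phi> + b) ` K)"
proof -
  have "continuous_map wstar_topology wstar_topology (\<lambda>\<phi>. c *\<^sub>R \<phi> + b)"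
  proof (rule W_cont_into)
    fix v
    show "continuous_map wstar_topology euclideanreal (\<lambda>x. blinfun_apply (c *\<^sub>R x + b) v)"
      by (simp add: blinfun.scaleR_left blinfun.add_left)
         (intro continuous_map_add continuous_map_real_mult_left W_eval continuous_map_canonical_const)
  qed
  then show ?thesis using image_compactin assms by blast
qed

lemma W_msum_compact:
  assumes "compactin wstar_topology A" "compactin wstar_topology B"
  shows "compactin wstar_topology (msum A B)"
proof -
  have eq: "msum A B = (\<lambda>p. fst p + snd p) ` (A \<times> B)" unfolding msum_def by force
  have "continuous_map (prod_topology wstar_topology wstar_topology) wstar_topology (\<lambda>p. fst p + snd p)"
  proof (rule W_cont_into)
    fix v
    show "continuous_map (prod_topology wstar_topology wstar_topology) euclideanreal (\<lambda>x. blinfun_apply (fst x + snd x) v)"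
      by (simp add: blinfun.add_left)
         (intro continuous_map_add W_eval_comp continuous_map_fst continuous_map_snd)
  qed
  moreover have "compactin (prod_topology wstar_topology wstar_topology) (A \<times> B)"
    using assms compactin_Times by blast
  ultimately show ?thesis unfolding eq using image_compactin by blast
qed

lemma hull2:
  fixes A B :: "'a::real_vector set"
  assumes "convex A" "convex B" "A \<noteq> {}" "B \<noteq> {}"
  shows "convex hull (A \<union> B) = (\<lambda>(t,a,b). (1 - t) *\<^sub>R a + t *\<^sub>R b) ` ({0..1} \<times> (A \<times> B))"
proof -
  let ?S = "\<lambda>i::bool. if i then B else A"
  have U: "\<Union>(?S ` UNIV) = A \<union> B" by auto
  have "convex hull (\<Union>(?S ` UNIV)) =
    {sum (\<lambda>i. c i *\<^sub>R s i) UNIV | c s. (\<forall>i\<in>UNIV. c i \<ge> 0) \<and> sum c UNIV = 1 \<and> (\<forall>i\<in>UNIV. s i \<in> ?S i)}"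
    by (rule convex_hull_finite_union) (use assms in auto)
  also have "\<dots> = (\<lambda>(t,a,b). (1 - t) *\<^sub>R a + t *\<^sub>R b) ` ({0..1} \<times> (A \<times> B))"
  proof (rule set_eqI, rule iffI)
    fix y assume "y \<in> {sum (\<lambda>i. c i *\<^sub>R s i) UNIV | c s. (\<forall>i\<in>UNIV. c i \<ge> 0) \<and> sum c UNIV = 1 \<and> (\<forall>i\<in>UNIV. s i \<in> ?S i)}"
    then obtain c s where cs: "y = sum (\<lambda>i. c i *\<^sub>R s i) UNIV" "\<forall>i. c i \<ge> 0" "sum c UNIV = 1" "\<forall>i. s i \<in> ?S i"
      by blast
    have "c False = 1 - c True" using cs(3) by (simp add: UNIV_bool)
    moreover have "y = c False *\<^sub>R s False + c True *\<^sub>R s True" using cs(1) by (simp add: UNIV_bool)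
    moreover have "c True \<in> {0..1}" using cs(2,3) by (simp add: UNIV_bool) (metis add_le_cancel_right add_0 cs(2))
    moreover have "s False \<in> A" "s True \<in> B" using cs(4) by (metis (full_types))+
    ultimately show "y \<in> (\<lambda>(t,a,b). (1 - t) *\<^sub>R a + t *\<^sub>R b) ` ({0..1} \<times> (A \<times> B))"
      by (intro image_eqI[of _ _ "(c True, s False, s True)"]) auto
  next
    fix y assume "y \<in> (\<lambda>(t,a,b). (1 - t) *\<^sub>R a + t *\<^sub>R b) ` ({0..1} \<times> (A \<times> B))"
    then obtain t a b where tab: "y = (1 - t) *\<^sub>R a + t *\<^sub>R b" "t \<in> {0..1}" "a \<in> A" "b \<in> B" by auto
    let ?c = "\<lambda>i::bool. if i then t else 1 - t"
    let ?s = "\<lambda>i::bool. if i then b else a"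
    have "y = sum (\<lambda>i. ?c i *\<^sub>R ?s i) UNIV" using tab by (simp add: UNIV_bool add.commute)
    moreover have "\<forall>i\<in>UNIV. ?c i \<ge> 0" "sum ?c UNIV = 1" "\<forall>i\<in>UNIV. ?s i \<in> ?S i"
      using tab by (auto simp: UNIV_bool)
    ultimately show "y \<in> {sum (\<lambda>i. c i *\<^sub>R s i) UNIV | c s. (\<forall>i\<in>UNIV. c i \<ge> 0) \<and> sum c UNIV = 1 \<and> (\<forall>i\<in>UNIV. s i \<in> ?S i)}"
      apply (intro CollectI exI[where x="?c"] exI[where x="?s"])
      apply (intro conjI)
      by assumption+
  qed
  finally show ?thesis using U by simp
qed

lemma W_hull2_compact:
  assumes "compactin wstar_topology A" "compactin wstar_topology B" "convex A" "convex B" "A \<noteq> {}" "B \<noteq> {}"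
  shows "compactin wstar_topology (convex hull (A \<union> B))"
proof -
  let ?f = "\<lambda>(t::real,a,b). (1 - t) *\<^sub>R a + t *\<^sub>R b"
  have "continuous_map (prod_topology euclideanreal (prod_topology wstar_topology wstar_topology)) wstar_topology ?f"
  proof (rule W_cont_into)
    fix v
    have "continuous_map (prod_topology euclideanreal (prod_topology wstar_topology wstar_topology)) euclideanreal
      (\<lambda>x. (1 - fst x) * blinfun_apply (fst (snd x)) v + fst x * blinfun_apply (snd (snd x)) v)"
      by (intro continuous_map_add continuous_map_real_mult continuous_map_diff continuous_map_canonical_const
           continuous_map_fst W_eval_comp continuous_map_compose[OF continuous_map_snd continuous_map_fst, unfolded o_def]
           continuous_map_compose[OF continuous_map_snd continuous_map_snd, unfolded o_def])
    then show "continuous_map (prod_topology euclideanreal (prod_topology wstar_topology wstar_topology)) euclideanreal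
      (\<lambda>x. blinfun_apply (?f x) v)"
      by (simp add: case_prod_beta blinfun.add_left blinfun.scaleR_left)
  qed
  moreover have "compactin (prod_topology euclideanreal (prod_topology wstar_topology wstar_topology)) ({0..1} \<times> (A \<times> B))"
    using assms by (simp add: compactin_Times)
  ultimately show ?thesis unfolding hull2[OF assms(3-6)] using image_compactin by blast
qed

lemma W_hull_compact:
  assumes "finite J" "\<forall>j\<in>J. compactin wstar_topology (S j) \<and> convex (S j)"
  shows "compactin wstar_topology (convex hull (\<Union>j\<in>J. S j))"
  using assms
proof (induction J rule: finite_induct)
  case empty
  then show ?case by simp
next
  case (insert a J)
  let ?R = "convex hull (\<Union>j\<in>J. S j)"
  have IH: "compactin wstar_topology ?R" using insert.prems by (intro insert.IH) blast
  have eq: "convex hull (\<Union>j\<in>insert a J. S j) = convex hull (S a \<union> ?R)"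
    by (simp only: UN_insert) (rule hull_Un_right)
  show ?case
  proof (cases "S a = {}")
    case True
    then show ?thesis unfolding eq using IH by (simp add: hull_hull)
  next
    case False
    show ?thesis
    proof (cases "?R = {}")
      case True
      have "convex (S a)" "compactin wstar_topology (S a)" using insert.prems by auto
      then have "convex hull (S a \<union> ?R) = S a" unfolding True by (simp add: hull_same)
      then show ?thesis unfolding eq using \<open>compactin wstar_topology (S a)\<close> by simp
    next
      case False
      then show ?thesis unfolding eq using \<open>S a \<noteq> {}\<close> insert.prems IH
        by (intro W_hull2_compact) auto
    qed
  qed
qed

lemma fsep:
  fixes D :: "('a::real_normed_vector \<Rightarrow>\<^sub>L real) set"
  assumes F: "finite F" and cD: "convex D" and e: "e > 0"
    and gap: "\<forall>d\<in>D. \<exists>v\<in>F. e \<le> \<bar>blinfun_apply d v\<bar>"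
  shows "\<exists>w. \<forall>d\<in>D. 1 \<le> blinfun_apply d w"
proof (cases "D = {}")
  case True then show ?thesis by simp
next
  case False
  then obtain d0 where d0: "d0 \<in> D" by blast
  then have Fne: "F \<noteq> {}" using gap by blast
  define Q where "Q = (\<lambda>x::'a \<Rightarrow> real. Max ((\<lambda>v. \<bar>x v\<bar>) ` F))"
  have Qge: "\<bar>x v\<bar> \<le> Q x" if "v \<in> F" for x v
    unfolding Q_def using F that by (intro Max_ge) auto
  have Qle: "Q x \<le> r" if "\<And>v. v \<in> F \<Longrightarrow> \<bar>x v\<bar> \<le> r" for x r
    unfolding Q_def using F Fne that by (subst Max_le_iff) auto
  have Qadd: "Q (\<lambda>v. x v + y v) \<le> Q x + Q y" for x y
  proof (rule Qle)
    fix v assume "v \<in> F"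
    then show "\<bar>x v + y v\<bar> \<le> Q x + Q y" using Qge[of v x] Qge[of v y] by linarith
  qed
  have Qnonneg: "0 \<le> Q x" for x
    using Qge[of _ x] Fne by (meson abs_ge_zero all_not_in_conv order_trans)
  have Qmul: "Q (\<lambda>v. c * x v) \<le> c * Q x" if "c \<ge> 0" for c x
  proof (rule Qle)
    fix v assume "v \<in> F"
    then show "\<bar>c * x v\<bar> \<le> c * Q x" using Qge[of v x] that by (simp add: abs_mult mult_left_mono)
  qed
  have Qneg: "Q (\<lambda>v. - x v) = Q x" for x unfolding Q_def by simp
  have QD: "e \<le> Q (\<lambda>v. blinfun_apply d v)" if "d \<in> D" for d
    using gap that Qge by (meson order_trans)
  have Qzero: "Q (\<lambda>v. 0) = 0" using Qnonneg Qle[of "\<lambda>v. 0" 0] by (simp add: antisym)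
  define H where "H = (\<lambda>x (t::real) d. (Q (\<lambda>v. x v + t * blinfun_apply d v) - t * e) / e)"
  define p where "p = (\<lambda>x. INF z\<in>({0..} \<times> D). H x (fst z) (snd z))"
  have Hlow: "- Q x / e \<le> H x t d" if "t \<ge> 0" "d \<in> D" for x t d
  proof -
    have "Q (\<lambda>v. t * blinfun_apply d v) \<le> Q (\<lambda>v. x v + t * blinfun_apply d v) + Q (\<lambda>v. - x v)"
      using Qadd[of "\<lambda>v. x v + t * blinfun_apply d v" "\<lambda>v. - x v"] by simp
    moreover have "t * e \<le> Q (\<lambda>v. t * blinfun_apply d v)"
    proof (cases "t = 0")
      case True then show ?thesis using Qnonneg by simp
    next
      case False
      then have "t > 0" using that by simp
      have "Q (\<lambda>v. (1/t) * (t * blinfun_apply d v)) \<le> (1/t) * Q (\<lambda>v. t * blinfun_apply d v)"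
        using Qmul[of "1/t" "\<lambda>v. t * blinfun_apply d v"] \<open>t > 0\<close> by simp
      then have "Q (\<lambda>v. blinfun_apply d v) \<le> (1/t) * Q (\<lambda>v. t * blinfun_apply d v)" using \<open>t>0\<close> by simp
      then have "t * Q (\<lambda>v. blinfun_apply d v) \<le> Q (\<lambda>v. t * blinfun_apply d v)" using \<open>t>0\<close>
        by (simp add: field_simps)
      moreover have "t * e \<le> t * Q (\<lambda>v. blinfun_apply d v)" using QD[OF that(2)] \<open>t>0\<close> by simp
      ultimately show ?thesis by linarith
    qed
    ultimately have "- Q x \<le> Q (\<lambda>v. x v + t * blinfun_apply d v) - t * e" using Qneg[of x] by linarith
    then have "(- Q x) / e \<le> (Q (\<lambda>v. x v + t * blinfun_apply d v) - t * e) / e"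
      by (rule divide_right_mono) (use e in simp)
    then show ?thesis unfolding H_def by simp
  qed
  have bdd: "bdd_below ((\<lambda>z. H x (fst z) (snd z)) ` ({0::real..} \<times> D))" for x
    using Hlow by (intro bdd_belowI2[where m="- Q x / e"]) auto
  have ne: "{0::real..} \<times> D \<noteq> {}" using d0 by (metis SigmaI atLeast_iff empty_iff order_refl)
  have ple: "p x \<le> H x t d" if "t \<ge> 0" "d \<in> D" for x t d
  proof -
    have "(t, d) \<in> {0..} \<times> D" using that by simp
    then show ?thesis unfolding p_def using cINF_lower[OF bdd, of "(t,d)" x] by simp
  qed
  have pge: "r \<le> p x" if "\<And>t d. t \<ge> 0 \<Longrightarrow> d \<in> D \<Longrightarrow> r \<le> H x t d" for r x
    unfolding p_def using that ne by (intro cINF_greatest) auto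
  have "sublin p"
    unfolding sublin_def
  proof (intro conjI allI impI)
    fix x y :: "'a \<Rightarrow> real"
    have A: "p (\<lambda>v. x v + y v) \<le> H x t1 d1 + H y t2 d2"
      if t: "t1 \<ge> 0" "t2 \<ge> 0" and d: "d1 \<in> D" "d2 \<in> D" for t1 t2 d1 d2
    proof (cases "t1 + t2 = 0")
      case True
      then have "t1 = 0" "t2 = 0" using t by auto
      have "p (\<lambda>v. x v + y v) \<le> H (\<lambda>v. x v + y v) 0 d1" using ple d by simp
      also have "\<dots> = Q (\<lambda>v. x v + y v) / e" unfolding H_def by simp
      also have "\<dots> \<le> (Q x + Q y) / e" using Qadd e by (simp add: divide_right_mono)
      also have "\<dots> = H x t1 d1 + H y t2 d2" unfolding H_def \<open>t1 = 0\<close> \<open>t2 = 0\<close> by (simp add: add_divide_distrib)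
      finally show ?thesis .
    next
      case False
      then have tp: "t1 + t2 > 0" using t by simp
      define d where "d = (t1 / (t1 + t2)) *\<^sub>R d1 + (t2 / (t1 + t2)) *\<^sub>R d2"
      have dD: "d \<in> D" unfolding d_def using cD d t tp
        by (intro convexD) (auto simp: add_divide_distrib[symmetric])
      have dv: "(t1 + t2) * blinfun_apply d v = t1 * blinfun_apply d1 v + t2 * blinfun_apply d2 v" for v
      proof -
        have "blinfun_apply d v = t1/(t1+t2) * blinfun_apply d1 v + t2/(t1+t2) * blinfun_apply d2 v"
          by (simp add: d_def blinfun.add_left blinfun.scaleR_left)
        then have "(t1 + t2) * blinfun_apply d v = ((t1+t2) * (t1/(t1+t2))) * blinfun_apply d1 v + ((t1+t2) * (t2/(t1+t2))) * blinfun_apply d2 v"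
          by (simp add: algebra_simps)
        moreover have "(t1+t2) * (t1/(t1+t2)) = t1" "(t1+t2) * (t2/(t1+t2)) = t2" using tp by simp_all
        ultimately show ?thesis by simp
      qed
      have "p (\<lambda>v. x v + y v) \<le> H (\<lambda>v. x v + y v) (t1 + t2) d" using ple dD tp by simp
      also have "\<dots> = (Q (\<lambda>v. (x v + t1 * blinfun_apply d1 v) + (y v + t2 * blinfun_apply d2 v)) - (t1 + t2) * e) / e"
        unfolding H_def dv by (simp add: algebra_simps)
      also have "\<dots> \<le> (Q (\<lambda>v. x v + t1 * blinfun_apply d1 v) + Q (\<lambda>v. y v + t2 * blinfun_apply d2 v) - (t1 + t2) * e) / e"
        using Qadd[of "\<lambda>v. x v + t1 * blinfun_apply d1 v" "\<lambda>v. y v + t2 * blinfun_apply d2 v"] e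
        by (simp add: divide_right_mono)
      also have "\<dots> = H x t1 d1 + H y t2 d2" unfolding H_def using e by (simp add: field_simps)
      finally show ?thesis .
    qed
    have B: "p (\<lambda>v. x v + y v) - H y t2 d2 \<le> p x" if "t2 \<ge> 0" "d2 \<in> D" for t2 d2
      by (rule pge) (use A that in fastforce)
    have "p (\<lambda>v. x v + y v) - p x \<le> p y"
      by (rule pge) (use B in fastforce)
    then show "p (\<lambda>v. x v + y v) \<le> p x + p y" by simp
  next
    fix c :: real and x :: "'a \<Rightarrow> real" assume c: "c > 0"
    have "p (\<lambda>v. c * x v) \<le> c * H x t d" if "t \<ge> 0" "d \<in> D" for t d
    proof -
      have "p (\<lambda>v. c * x v) \<le> H (\<lambda>v. c * x v) (c * t) d" using ple that c by simp
      also have "\<dots> = (Q (\<lambda>v. c * (x v + t * blinfun_apply d v)) - c * t * e) / e"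
        unfolding H_def by (simp add: algebra_simps)
      also have "\<dots> \<le> (c * Q (\<lambda>v. x v + t * blinfun_apply d v) - c * t * e) / e"
        using Qmul[of c "\<lambda>v. x v + t * blinfun_apply d v"] c e by (simp add: divide_right_mono)
      also have "\<dots> = c * H x t d" unfolding H_def using e by (simp add: field_simps)
      finally show ?thesis .
    qed
    then have "p (\<lambda>v. c * x v) / c \<le> p x" using c
      by (intro pge) (simp add: divide_le_eq mult.commute)
    then show "p (\<lambda>v. c * x v) \<le> c * p x" using c by (simp add: divide_le_eq mult.commute)
  qed
  moreover have "\<forall>x y. (\<forall>v\<in>F. x v = y v) \<longrightarrow> p x = p y"
  proof (intro allI impI)
    fix x y :: "'a \<Rightarrow> real" assume xy: "\<forall>v\<in>F. x v = y v"
    have "Q (\<lambda>v. x v + t * blinfun_apply d v) = Q (\<lambda>v. y v + t * blinfun_apply d v)" for t d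
      unfolding Q_def using xy by (intro arg_cong[where f=Max] image_cong) auto
    then have "H x = H y" unfolding H_def by (intro ext) simp
    then show "p x = p y" unfolding p_def by simp
  qed
  ultimately obtain lam where lam: "\<And>x. (\<Sum>v\<in>F. lam v * x v) \<le> p x"
    using finite_HB[OF F] by blast
  show ?thesis
  proof (intro exI ballI)
    fix d assume "d \<in> D"
    have "(\<Sum>v\<in>F. lam v * (- blinfun_apply d v)) \<le> p (\<lambda>v. - blinfun_apply d v)" by (rule lam)
    also have "\<dots> \<le> H (\<lambda>v. - blinfun_apply d v) 1 d" using ple \<open>d \<in> D\<close> by simp
    also have "\<dots> = -1" unfolding H_def using Qzero e by simp
    finally have "1 \<le> (\<Sum>v\<in>F. lam v * blinfun_apply d v)" by (simp add: sum_negf)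
    also have "\<dots> = blinfun_apply d (\<Sum>v\<in>F. lam v *\<^sub>R v)"
      by (simp add: blinfun.sum_right blinfun.scaleR_right)
    finally show "1 \<le> blinfun_apply d (\<Sum>v\<in>F. lam v *\<^sub>R v)" .
  qed
qed

lemma sep:
  fixes K :: "('a::real_normed_vector \<Rightarrow>\<^sub>L real) set"
  assumes cK: "compactin wstar_topology K" and vK: "convex K"
    and disj: "K \<inter> (wstar_topology closure_of span T) = {}"
  shows "\<exists>w. (\<forall>s\<in>span T. blinfun_apply s w = 0) \<and> (\<forall>k\<in>K. blinfun_apply k w \<le> -1)"
proof (cases "K = {}")
  case True
  then show ?thesis by (intro exI[of _ 0]) (simp add: blinfun.zero_right)
next
  case False
  then obtain k0 where k0: "k0 \<in> K" by blast
  define box where "box = (\<lambda>k F e. {\<phi>::'a \<Rightarrow>\<^sub>L real. \<forall>v\<in>F. \<bar>blinfun_apply \<phi> v - blinfun_apply k v\<bar> < e})"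
  have "\<exists>F e. finite F \<and> e > 0 \<and> box k F e \<inter> span T = {}" if "k \<in> K" for k
  proof -
    have "k \<notin> wstar_topology closure_of span T" using disj that by blast
    then obtain U where U: "k \<in> U" "openin wstar_topology U" "span T \<inter> U = {}"
      unfolding in_closure_of by auto
    obtain F e where "finite F" "e > 0" "box k F e \<subseteq> U"
      using W_nbhd[OF U(2,1)] unfolding box_def by blast
    then show ?thesis using U(3) by blast
  qed
  then obtain FF ee where FE: "\<And>k. k \<in> K \<Longrightarrow> finite (FF k) \<and> ee k > 0 \<and> box k (FF k) (ee k) \<inter> span T = {}"
    by metis
  define N where "N = (\<lambda>k. box k (FF k) (ee k / 2))"
  have Nopen: "openin wstar_topology (N k)" if "k \<in> K" for k
    unfolding N_def box_def using FE[OF that] by (intro W_box_open) auto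
  have Nk: "k \<in> N k" if "k \<in> K" for k
    unfolding N_def box_def using FE[OF that] by auto
  have "K \<subseteq> \<Union>(N ` K)" using Nk by blast
  then obtain \<F> where \<F>: "finite \<F>" "\<F> \<subseteq> N ` K" "K \<subseteq> \<Union>\<F>"
    using cK Nopen unfolding compactin_def by (metis (no_types, lifting) imageE)
  then obtain K' where K': "finite K'" "K' \<subseteq> K" "\<F> = N ` K'"
    by (meson finite_subset_image)
  have K'ne: "K' \<noteq> {}" using \<F>(3) K'(3) k0 by auto
  define F where "F = (\<Union>k\<in>K'. FF k)"
  define e where "e = Min ((\<lambda>k. ee k / 2) ` K')"
  have Ffin: "finite F" unfolding F_def using K' FE by blast
  have epos: "e > 0" unfolding e_def using K' K'ne FE by (subst Min_gr_iff) auto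
  have ele: "e \<le> ee k / 2" if "k \<in> K'" for k unfolding e_def using K' that by (intro Min_le) auto
  define D where "D = {s - k | s k. s \<in> span T \<and> k \<in> K}"
  have gap: "\<forall>d\<in>D. \<exists>v\<in>F. e \<le> \<bar>blinfun_apply d v\<bar>"
  proof
    fix d assume "d \<in> D"
    then obtain s k where sk: "d = s - k" "s \<in> span T" "k \<in> K" unfolding D_def by blast
    show "\<exists>v\<in>F. e \<le> \<bar>blinfun_apply d v\<bar>"
    proof (rule ccontr)
      assume "\<not> ?thesis"
      then have small: "\<forall>v\<in>F. \<bar>blinfun_apply s v - blinfun_apply k v\<bar> < e"
        using sk(1) by (auto simp: blinfun.diff_left not_le)
      obtain k1 where k1: "k1 \<in> K'" "k \<in> N k1" using \<F>(3) K'(3) sk(3) by blast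
      have "s \<in> box k1 (FF k1) (ee k1)"
        unfolding box_def
      proof (intro CollectI ballI)
        fix v assume v: "v \<in> FF k1"
        then have "v \<in> F" unfolding F_def using k1 by blast
        then have "\<bar>blinfun_apply s v - blinfun_apply k v\<bar> < e" using small by blast
        moreover have "\<bar>blinfun_apply k v - blinfun_apply k1 v\<bar> < ee k1 / 2"
          using k1(2) v unfolding N_def box_def by blast
        moreover have "e \<le> ee k1 / 2" using ele k1 by blast
        ultimately show "\<bar>blinfun_apply s v - blinfun_apply k1 v\<bar> < ee k1" by linarith
      qed
      then show False using FE[of k1] k1 K'(2) sk(2) by blast
    qed
  qed
  have cD: "convex D"
  proof (rule convexI)
    fix x y and u v :: real assume xy: "x \<in> D" "y \<in> D" and uv: "0 \<le> u" "0 \<le> v" "u + v = 1"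
    obtain s1 k1 where 1: "x = s1 - k1" "s1 \<in> span T" "k1 \<in> K" using xy(1) unfolding D_def by blast
    obtain s2 k2 where 2: "y = s2 - k2" "s2 \<in> span T" "k2 \<in> K" using xy(2) unfolding D_def by blast
    have "u *\<^sub>R x + v *\<^sub>R y = (u *\<^sub>R s1 + v *\<^sub>R s2) - (u *\<^sub>R k1 + v *\<^sub>R k2)"
      unfolding 1(1) 2(1) by (simp add: algebra_simps)
    moreover have "u *\<^sub>R s1 + v *\<^sub>R s2 \<in> span T" using 1 2 by (intro span_add span_scale) auto
    moreover have "u *\<^sub>R k1 + v *\<^sub>R k2 \<in> K" using 1 2 uv vK by (intro convexD) auto
    ultimately show "u *\<^sub>R x + v *\<^sub>R y \<in> D" unfolding D_def by blast
  qed
  obtain w where w: "\<forall>d\<in>D. 1 \<le> blinfun_apply d w" using fsep[OF Ffin cD epos gap] by blast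
  have Kw: "blinfun_apply k w \<le> -1" if "k \<in> K" for k
  proof -
    have "0 - k \<in> D" unfolding D_def using that span_zero by blast
    then have "1 \<le> blinfun_apply (0 - k) w" using w by blast
    then show ?thesis by (simp add: blinfun.minus_left)
  qed
  have Tw: "blinfun_apply s w = 0" if "s \<in> span T" for s
  proof (rule ccontr)
    assume ne: "blinfun_apply s w \<noteq> 0"
    define r where "r = blinfun_apply k0 w / blinfun_apply s w"
    have "r *\<^sub>R s - k0 \<in> D" unfolding D_def using that k0 span_scale by blast
    then have "1 \<le> blinfun_apply (r *\<^sub>R s - k0) w" using w by blast
    also have "blinfun_apply (r *\<^sub>R s - k0) w = 0"
      using ne by (simp add: r_def blinfun.diff_left blinfun.scaleR_left)
    finally show False by simp
  qed
  show ?thesis using Kw Tw by blast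
qed

lemma supp_le_iff:
  "compactin wstar_topology S \<Longrightarrow> S \<noteq> {} \<Longrightarrow> supp S v \<le> r \<longleftrightarrow> (\<forall>\<phi>\<in>S. blinfun_apply \<phi> v \<le> r)"
  unfolding supp_def by (rule cSUP_le_iff) (auto simp: W_bdd)

lemma supp_ltD:
  assumes "compactin wstar_topology S" "\<phi> \<in> S" "supp S v < r"
  shows "blinfun_apply \<phi> v < r"
proof -
  have "blinfun_apply \<phi> v \<le> supp S v"
    unfolding supp_def by (rule cSUP_upper[OF assms(2) W_bdd(1)[OF assms(1)]])
  then show ?thesis using assms(3) by linarith
qed

lemma supp_lt_intro:
  "S \<noteq> {} \<Longrightarrow> \<forall>\<phi>\<in>S. blinfun_apply \<phi> v \<le> -1 \<Longrightarrow> supp S v < 0"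
  unfolding supp_def using cSUP_least[of S "\<lambda>\<phi>. blinfun_apply \<phi> v" "-1"] by fastforce

lemma cpt_tr: "compactin wstar_topology K \<Longrightarrow> compactin wstar_topology ((\<lambda>\<phi>. \<phi> + y) ` K)"
  using W_affine_compact[of K 1 y] by simp

lemma cpt_tr2: "compactin wstar_topology K \<Longrightarrow> compactin wstar_topology ((\<lambda>\<phi>. y + \<phi>) ` K)"
  using W_affine_compact[of K 1 y] by (simp add: add.commute)

lemma cpt_neg: "compactin wstar_topology K \<Longrightarrow> compactin wstar_topology ((\<lambda>\<psi>. - x - \<psi>) ` K)"
proof -
  assume "compactin wstar_topology K"
  then have c: "compactin wstar_topology ((\<lambda>\<psi>. (-1) *\<^sub>R \<psi> + - x) ` K)" by (rule W_affine_compact)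
  have eq: "(\<lambda>\<psi>. (-1) *\<^sub>R \<psi> + - x) = (\<lambda>\<psi>. - x - \<psi>)" by (rule ext) simp
  show ?thesis using c unfolding eq .
qed

lemma cvx_tr: "convex K \<Longrightarrow> convex ((\<lambda>\<phi>. \<phi> + y) ` K)"
proof -
  assume c: "convex K"
  have eq: "(\<lambda>\<phi>. \<phi> + y) = (+) y" by (rule ext) (simp add: add.commute)
  show ?thesis unfolding eq using c by (rule convex_translation)
qed

lemma cvx_tr2: "convex K \<Longrightarrow> convex ((\<lambda>\<phi>. y + \<phi>) ` K)"
  by (rule convex_translation)

lemma cvx_msum: "convex A \<Longrightarrow> convex B \<Longrightarrow> convex (msum A B)"
proof -
  assume A: "convex A" and B: "convex B"
  show "convex (msum A B)"
  proof (rule convexI)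
    fix x y and u v :: real assume xy: "x \<in> msum A B" "y \<in> msum A B" and uv: "0 \<le> u" "0 \<le> v" "u + v = 1"
    obtain a1 b1 where 1: "x = a1 + b1" "a1 \<in> A" "b1 \<in> B" using xy(1) unfolding msum_def by blast
    obtain a2 b2 where 2: "y = a2 + b2" "a2 \<in> A" "b2 \<in> B" using xy(2) unfolding msum_def by blast
    have "u *\<^sub>R x + v *\<^sub>R y = (u *\<^sub>R a1 + v *\<^sub>R a2) + (u *\<^sub>R b1 + v *\<^sub>R b2)"
      unfolding 1(1) 2(1) by (simp add: algebra_simps)
    moreover have "u *\<^sub>R a1 + v *\<^sub>R a2 \<in> A" using 1 2 uv A by (intro convexD) auto
    moreover have "u *\<^sub>R b1 + v *\<^sub>R b2 \<in> B" using 1 2 uv B by (intro convexD) auto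
    ultimately show "u *\<^sub>R x + v *\<^sub>R y \<in> msum A B" unfolding msum_def by blast
  qed
qed

lemma avg_eq:
  fixes f :: "'e \<Rightarrow> real"
  assumes "finite E" "\<forall>e\<in>E. f e \<le> m" "m * real (card E) = (\<Sum>e\<in>E. f e)"
  shows "\<forall>e\<in>E. f e = m"
proof -
  have "(\<Sum>e\<in>E. m - f e) = m * real (card E) - (\<Sum>e\<in>E. f e)"
    by (simp add: sum_subtractf mult.commute)
  then have "(\<Sum>e\<in>E. m - f e) = 0" using assms(3) by simp
  moreover have "\<forall>e\<in>E. 0 \<le> m - f e" using assms(2) by simp
  ultimately have "\<forall>e\<in>E. m - f e = 0" using sum_nonneg_eq_0_iff[OF assms(1), of "\<lambda>e. m - f e"] by simp
  then show ?thesis by simp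
qed

lemma kill:
  fixes L U :: "'k \<Rightarrow> ('a::real_normed_vector \<Rightarrow>\<^sub>L real) set"
  assumes LU: "\<forall>k\<in>A. convex (L k) \<and> convex (U k) \<and> L k \<noteq> {} \<and> U k \<noteq> {}"
    and q: "q \<in> span (\<Union>k\<in>A. msum (L k) (U k))"
  shows "\<exists>x y. (\<forall>k\<in>A. x k \<in> L k \<and> y k \<in> U k) \<and>
    (\<forall>w. (\<forall>k\<in>A. (\<forall>a\<in>L k. blinfun_apply (a + y k) w \<le> 0) \<and> (\<forall>b\<in>U k. blinfun_apply (- x k - b) w \<le> 0))
        \<longrightarrow> blinfun_apply q w = 0)"
proof -
  obtain S u where S: "finite S" "S \<subseteq> (\<Union>k\<in>A. msum (L k) (U k))" "q = (\<Sum>e\<in>S. u e *\<^sub>R e)"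
    using q unfolding span_explicit by blast
  have "\<forall>e\<in>S. \<exists>k c d. k \<in> A \<and> c \<in> L k \<and> d \<in> U k \<and> e = c + d"
    using S(2) unfolding msum_def by blast
  then obtain \<kappa> c d where cd: "\<And>e. e \<in> S \<Longrightarrow> \<kappa> e \<in> A \<and> c e \<in> L (\<kappa> e) \<and> d e \<in> U (\<kappa> e) \<and> e = c e + d e"
    by metis
  define E where "E = (\<lambda>k. {e\<in>S. \<kappa> e = k})"
  have Efin: "finite (E k)" for k unfolding E_def using S(1) by simp
  define x where "x = (\<lambda>k. if E k = {} then (SOME a. a \<in> L k) else (\<Sum>e\<in>E k. (1 / real (card (E k))) *\<^sub>R c e))"
  define y where "y = (\<lambda>k. if E k = {} then (SOME a. a \<in> U k) else (\<Sum>e\<in>E k. (1 / real (card (E k))) *\<^sub>R d e))"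
  have cardsum: "(\<Sum>e\<in>E k. 1 / real (card (E k))) = 1" if "E k \<noteq> {}" for k
    using that Efin[of k] by (simp add: card_gt_0_iff)
  have xm: "x k \<in> L k" if "k \<in> A" for k
  proof (cases "E k = {}")
    case True then show ?thesis unfolding x_def using LU that by (simp add: some_in_eq)
  next
    case False
    have "(\<Sum>e\<in>E k. (1 / real (card (E k))) *\<^sub>R c e) \<in> L k"
      by (rule convex_sum[OF Efin]) (use LU that cardsum[OF False] cd in \<open>auto simp: E_def\<close>)
    then show ?thesis unfolding x_def using False by simp
  qed
  have ym: "y k \<in> U k" if "k \<in> A" for k
  proof (cases "E k = {}")
    case True then show ?thesis unfolding y_def using LU that by (simp add: some_in_eq)
  next
    case False
    have "(\<Sum>e\<in>E k. (1 / real (card (E k))) *\<^sub>R d e) \<in> U k"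
      by (rule convex_sum[OF Efin]) (use LU that cardsum[OF False] cd in \<open>auto simp: E_def\<close>)
    then show ?thesis unfolding y_def using False by simp
  qed
  show ?thesis
  proof (intro exI conjI allI impI ballI)
    fix k assume "k \<in> A" then show "x k \<in> L k" "y k \<in> U k" using xm ym by auto
  next
    fix w assume H: "\<forall>k\<in>A. (\<forall>a\<in>L k. blinfun_apply (a + y k) w \<le> 0) \<and> (\<forall>b\<in>U k. blinfun_apply (- x k - b) w \<le> 0)"
    have ew: "blinfun_apply e w = 0" if e: "e \<in> S" for e
    proof -
      define k where "k = \<kappa> e"
      have kA: "k \<in> A" using cd[OF e] k_def by simp
      have eE: "e \<in> E k" unfolding E_def k_def using e by simp
      then have Ene: "E k \<noteq> {}" by blast
      have H1: "\<forall>a\<in>L k. blinfun_apply a w + blinfun_apply (y k) w \<le> 0"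
        using H kA by (simp add: blinfun.add_left)
      have H2: "\<forall>b\<in>U k. - blinfun_apply (x k) w - blinfun_apply b w \<le> 0"
        using H kA by (simp add: blinfun.diff_left blinfun.minus_left)
      have ab: "blinfun_apply (x k) w + blinfun_apply (y k) w = 0"
        using H1 xm[OF kA] H2 ym[OF kA] by force
      have cE: "\<forall>e'\<in>E k. c e' \<in> L k" "\<forall>e'\<in>E k. d e' \<in> U k" using cd unfolding E_def by auto
      have xs: "blinfun_apply (x k) w = (\<Sum>e'\<in>E k. (1 / real (card (E k))) * blinfun_apply (c e') w)"
        unfolding x_def using Ene by (simp add: blinfun.sum_left blinfun.scaleR_left)
      have ys: "blinfun_apply (y k) w = (\<Sum>e'\<in>E k. (1 / real (card (E k))) * blinfun_apply (d e') w)"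
        unfolding y_def using Ene by (simp add: blinfun.sum_left blinfun.scaleR_left)
      have cardpos: "real (card (E k)) > 0" using Ene Efin[of k] by (simp add: card_gt_0_iff)
      have c1: "blinfun_apply (x k) w * real (card (E k)) = (\<Sum>e'\<in>E k. blinfun_apply (c e') w)"
        unfolding xs sum_distrib_left[symmetric] using cardpos by simp
      have d1: "(- blinfun_apply (y k) w) * real (card (E k)) = (\<Sum>e'\<in>E k. - blinfun_apply (d e') w)"
        unfolding ys sum_distrib_left[symmetric] using cardpos by (simp add: sum_negf)
      have "\<forall>e'\<in>E k. blinfun_apply (c e') w = blinfun_apply (x k) w"
        by (rule avg_eq[OF Efin _ c1]) (use H1 cE ab in force)
      moreover have "\<forall>e'\<in>E k. - blinfun_apply (d e') w = - blinfun_apply (y k) w"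
        by (rule avg_eq[OF Efin _ d1]) (use H2 cE ab in force)
      ultimately have "blinfun_apply (c e) w + blinfun_apply (d e) w = 0" using eE ab by force
      then show ?thesis using cd[OF e] by (metis blinfun.add_left)
    qed
    show "blinfun_apply q w = 0" unfolding S(3)
      by (simp add: blinfun.sum_left blinfun.scaleR_left ew)
  qed
qed

lemma sum_neg:
  fixes \<mu> t :: "'j \<Rightarrow> real"
  assumes "finite J" "\<forall>j\<in>J. \<mu> j \<ge> 0" "sum \<mu> J = 1" "\<forall>j\<in>J. t j < 0"
  shows "(\<Sum>j\<in>J. \<mu> j * t j) < 0"
proof -
  obtain j0 where j0: "j0 \<in> J" "\<mu> j0 > 0"
  proof (rule ccontr)
    assume "\<not> thesis"
    then have "\<forall>j\<in>J. \<mu> j = 0" using assms(2) that by force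
    then have "sum \<mu> J = 0" by simp
    then show False using assms(3) by simp
  qed
  have "(\<Sum>j\<in>J. \<mu> j * t j) = \<mu> j0 * t j0 + (\<Sum>j\<in>J - {j0}. \<mu> j * t j)"
    using j0(1) assms(1) by (simp add: sum.remove)
  moreover have "(\<Sum>j\<in>J - {j0}. \<mu> j * t j) \<le> 0"
    using assms(2,4) by (intro sum_nonpos) (simp add: mult_nonneg_nonpos less_imp_le)
  moreover have "\<mu> j0 * t j0 < 0" using j0 assms(4) by (simp add: mult_pos_neg)
  ultimately show ?thesis by linarith
qed

theorem proposition2:
  fixes f g :: "nat \<Rightarrow> 'a::banach \<Rightarrow> real"
    and m l :: nat
    and xbar :: 'a
    and Lf Uf Lg Ug :: "nat \<Rightarrow> ('a \<Rightarrow>\<^sub>L real) set"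
  defines "I \<equiv> {1..m}"
    and "J0 \<equiv> {j \<in> {1..l}. g j xbar = 0}"
    and "Df \<equiv> \<lambda>i. msum (Lf i) (Uf i)"
    and "Dg \<equiv> \<lambda>j. msum (Lg j) (Ug j)"
  defines "condA \<equiv> (\<forall>i\<in>I. Df i \<inter>
              (wstar_topology closure_of span (\<Union>k\<in>I - {i}. Df k)) = {})"
    and "condB \<equiv> (convex hull (\<Union>j\<in>J0. Dg j) \<inter>
              (wstar_topology closure_of span (\<Union>i\<in>I. Df i)) = {})"
    and "condQ \<equiv> \<lambda>x y z.
          (\<forall>i\<in>I. \<exists>v. supp ((\<lambda>\<phi>. \<phi> + y i) ` Lf i) v < 0 \<and>
              (\<forall>k\<in>I - {i}. supp ((\<lambda>\<phi>. \<phi> + y k) ` Lf k) v \<le> 0 \<and>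
                             supp ((\<lambda>\<psi>. - x k - \<psi>) ` Uf k) v \<le> 0)) \<and>
          (\<forall>i\<in>I. \<exists>w. supp ((\<lambda>\<psi>. - x i - \<psi>) ` Uf i) w < 0 \<and>
              (\<forall>k\<in>I - {i}. supp ((\<lambda>\<psi>. - x k - \<psi>) ` Uf k) w \<le> 0 \<and>
                             supp ((\<lambda>\<phi>. \<phi> + y k) ` Lf k) w \<le> 0)) \<and>
          (\<exists>v0. (\<forall>j\<in>J0. supp ((\<lambda>\<phi>. \<phi> + z j) ` Lg j) v0 < 0) \<and>
              (\<forall>i\<in>I. supp ((\<lambda>\<phi>. \<phi> + y i) ` Lf i) v0 \<le> 0 \<and>
                      supp ((\<lambda>\<psi>. - x i - \<psi>) ` Uf i) v0 \<le> 0))"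
  defines "QforAll \<equiv> (\<forall>x y z. (\<forall>i\<in>I. x i \<in> Lf i \<and> y i \<in> Uf i) \<longrightarrow>
                            (\<forall>j\<in>J0. z j \<in> Ug j) \<longrightarrow> condQ x y z)"
  defines "MFCQ \<equiv> (\<forall>i\<in>I. Df i \<inter> span (\<Union>k\<in>I - {i}. Df k) = {}) \<and>
           (\<exists>v0. (\<forall>i\<in>I. \<forall>\<phi>\<in>Df i. blinfun_apply \<phi> v0 = 0) \<and>
                 (\<forall>j\<in>J0. \<forall>\<phi>\<in>Dg j. blinfun_apply \<phi> v0 < 0))"
  assumes feq: "\<forall>i\<in>I. f i xbar = 0"
    and gle: "\<forall>j\<in>{1..l}. g j xbar \<le> 0"
    and qdf: "\<forall>i\<in>I. is_quasidiff (f i) xbar (Lf i) (Uf i)"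
    and qdg: "\<forall>j\<in>J0. is_quasidiff (g j) xbar (Lg j) (Ug j)"
  shows "(condA \<and> condB \<longrightarrow> QforAll)
    \<and> ((\<forall>i\<in>I. closedin wstar_topology (span (\<Union>k\<in>I - {i}. Df k))) \<and>
         closedin wstar_topology (span (\<Union>i\<in>I. Df i)) \<longrightarrow>
         (QforAll \<longrightarrow> condA \<and> condB))
    \<and> ((\<forall>i\<in>I. closedin wstar_topology (span (\<Union>k\<in>I - {i}. Df k))) \<longrightarrow>
         (condA \<and> condB \<longleftrightarrow> MFCQ))"
proof -
  have finI: "finite I" unfolding I_def by simp
  have finJ0: "finite J0" unfolding J0_def by simp
  have qf: "Lf i \<noteq> {} \<and> Uf i \<noteq> {} \<and> convex (Lf i) \<and> convex (Uf i) \<and>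
      compactin wstar_topology (Lf i) \<and> compactin wstar_topology (Uf i)" if "i \<in> I" for i
    using qdf that unfolding is_quasidiff_def by blast
  have qg: "Lg j \<noteq> {} \<and> Ug j \<noteq> {} \<and> convex (Lg j) \<and> convex (Ug j) \<and>
      compactin wstar_topology (Lg j) \<and> compactin wstar_topology (Ug j)" if "j \<in> J0" for j
    using qdg that unfolding is_quasidiff_def by blast
  have Df_mem: "a + b \<in> Df i" if "a \<in> Lf i" "b \<in> Uf i" for a b i
    unfolding Df_def msum_def using that by blast
  have Dg_mem: "a + b \<in> Dg j" if "a \<in> Lg j" "b \<in> Ug j" for a b j
    unfolding Dg_def msum_def using that by blast
  have Dg_cvx: "convex (Dg j)" "compactin wstar_topology (Dg j)" "Dg j \<noteq> {}" if "j \<in> J0" for j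
  proof -
    show "convex (Dg j)" unfolding Dg_def using qg[OF that] by (intro cvx_msum) auto
    show "compactin wstar_topology (Dg j)" unfolding Dg_def using qg[OF that] by (intro W_msum_compact) auto
    show "Dg j \<noteq> {}" unfolding Dg_def msum_def using qg[OF that] by blast
  qed
  have cLU: "compactin wstar_topology (Lf i)" "convex (Lf i)" "Lf i \<noteq> {}"
     "compactin wstar_topology (Uf i)" "convex (Uf i)" "Uf i \<noteq> {}" if "i \<in> I" for i
    using qf[OF that] by auto
  have Df_sub: "Df k \<subseteq> span (\<Union>k\<in>I'. Df k)" if "k \<in> I'" for k I'
    using that span_superset by blast

  have zeroF: "\<forall>k\<in>I'. supp ((\<lambda>\<phi>. \<phi> + y k) ` Lf k) w \<le> 0 \<and> supp ((\<lambda>\<psi>. - x k - \<psi>) ` Uf k) w \<le> 0"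
    if I': "I' \<subseteq> I" and xy: "\<forall>i\<in>I. x i \<in> Lf i \<and> y i \<in> Uf i"
      and ann: "\<forall>s\<in>span (\<Union>k\<in>I'. Df k). blinfun_apply s w = 0" for I' x y w
  proof
    fix k assume k: "k \<in> I'"
    then have kI: "k \<in> I" using I' by blast
    have 1: "supp ((\<lambda>\<phi>. \<phi> + y k) ` Lf k) w \<le> 0"
    proof (subst supp_le_iff)
      show "compactin wstar_topology ((\<lambda>\<phi>. \<phi> + y k) ` Lf k)" using qf[OF kI] by (intro cpt_tr) auto
      show "(\<lambda>\<phi>. \<phi> + y k) ` Lf k \<noteq> {}" using qf[OF kI] by auto
      show "\<forall>\<phi>\<in>(\<lambda>\<phi>. \<phi> + y k) ` Lf k. blinfun_apply \<phi> w \<le> 0"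
        using ann Df_sub[OF k] Df_mem xy kI by fastforce
    qed
    have 2: "supp ((\<lambda>\<psi>. - x k - \<psi>) ` Uf k) w \<le> 0"
    proof (subst supp_le_iff)
      show "compactin wstar_topology ((\<lambda>\<psi>. - x k - \<psi>) ` Uf k)" using qf[OF kI] by (intro cpt_neg) auto
      show "(\<lambda>\<psi>. - x k - \<psi>) ` Uf k \<noteq> {}" using qf[OF kI] by auto
      show "\<forall>\<phi>\<in>(\<lambda>\<psi>. - x k - \<psi>) ` Uf k. blinfun_apply \<phi> w \<le> 0"
      proof
        fix \<phi> assume "\<phi> \<in> (\<lambda>\<psi>. - x k - \<psi>) ` Uf k"
        then obtain b where b: "b \<in> Uf k" "\<phi> = - x k - b" by blast
        have "x k + b \<in> span (\<Union>k\<in>I'. Df k)" using Df_sub[OF k] Df_mem[of "x k" k b] xy kI b(1) by blast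
        then have "blinfun_apply (x k + b) w = 0" using ann by blast
        then show "blinfun_apply \<phi> w \<le> 0" using b(2)
          by (simp add: blinfun.minus_left blinfun.diff_left blinfun.add_left)
      qed
    qed
    show "supp ((\<lambda>\<phi>. \<phi> + y k) ` Lf k) w \<le> 0 \<and> supp ((\<lambda>\<psi>. - x k - \<psi>) ` Uf k) w \<le> 0"
      using 1 2 by simp
  qed

  have PA: "condA \<and> condB \<longrightarrow> QforAll"
  proof
    assume AB: "condA \<and> condB"
    show QforAll unfolding QforAll_def
    proof (intro allI impI)
      fix x y z assume xy: "\<forall>i\<in>I. x i \<in> Lf i \<and> y i \<in> Uf i" and zz: "\<forall>j\<in>J0. z j \<in> Ug j"
      have Q1: "\<exists>v. supp ((\<lambda>\<phi>. \<phi> + y i) ` Lf i) v < 0 \<and>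
              (\<forall>k\<in>I - {i}. supp ((\<lambda>\<phi>. \<phi> + y k) ` Lf k) v \<le> 0 \<and>
                             supp ((\<lambda>\<psi>. - x k - \<psi>) ` Uf k) v \<le> 0)" if i: "i \<in> I" for i
      proof -
        let ?K = "(\<lambda>\<phi>. \<phi> + y i) ` Lf i"
        note cLi = cLU(1,2)[OF i]
        have sub: "?K \<subseteq> Df i" using Df_mem xy i by auto
        let ?C = "wstar_topology closure_of span (\<Union>k\<in>I - {i}. Df k)"
        have hA: "Df i \<inter> ?C = {}" using AB i unfolding condA_def by blast
        from sub have "?K \<inter> ?C \<subseteq> Df i \<inter> ?C" by (rule Int_mono) simp
        then have "?K \<inter> ?C = {}" by (simp only: hA subset_empty)
        then have "\<exists>w. (\<forall>s\<in>span (\<Union>k\<in>I - {i}. Df k). blinfun_apply s w = 0) \<and> (\<forall>k\<in>?K. blinfun_apply k w \<le> -1)"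
          by (rule sep[OF cpt_tr[OF cLi(1)] cvx_tr[OF cLi(2)]])
        then obtain w where w0: "(\<forall>s\<in>span (\<Union>k\<in>I - {i}. Df k). blinfun_apply s w = 0) \<and> (\<forall>k\<in>?K. blinfun_apply k w \<le> -1)" ..
        note w = conjunct1[OF w0] conjunct2[OF w0]
        have "supp ?K w < 0" using w(2) qf[OF i] by (intro supp_lt_intro) auto
        moreover have "\<forall>k\<in>I - {i}. supp ((\<lambda>\<phi>. \<phi> + y k) ` Lf k) w \<le> 0 \<and> supp ((\<lambda>\<psi>. - x k - \<psi>) ` Uf k) w \<le> 0"
          using zeroF[of "I - {i}" x y w] xy w(1) by blast
        ultimately show ?thesis by blast
      qed
      have Q2: "\<exists>w. supp ((\<lambda>\<psi>. - x i - \<psi>) ` Uf i) w < 0 \<and>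
              (\<forall>k\<in>I - {i}. supp ((\<lambda>\<psi>. - x k - \<psi>) ` Uf k) w \<le> 0 \<and>
                             supp ((\<lambda>\<phi>. \<phi> + y k) ` Lf k) w \<le> 0)" if i: "i \<in> I" for i
      proof -
        let ?K = "(\<lambda>\<psi>. x i + \<psi>) ` Uf i"
        note cUi = cLU(4,5)[OF i]
        have sub: "?K \<subseteq> Df i" using Df_mem xy i by auto
        let ?C = "wstar_topology closure_of span (\<Union>k\<in>I - {i}. Df k)"
        have hA: "Df i \<inter> ?C = {}" using AB i unfolding condA_def by blast
        from sub have "?K \<inter> ?C \<subseteq> Df i \<inter> ?C" by (rule Int_mono) simp
        then have "?K \<inter> ?C = {}" by (simp only: hA subset_empty)
        then have "\<exists>w. (\<forall>s\<in>span (\<Union>k\<in>I - {i}. Df k). blinfun_apply s w = 0) \<and> (\<forall>k\<in>?K. blinfun_apply k w \<le> -1)"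
          by (rule sep[OF cpt_tr2[OF cUi(1)] cvx_tr2[OF cUi(2)]])
        then obtain w where w0: "(\<forall>s\<in>span (\<Union>k\<in>I - {i}. Df k). blinfun_apply s w = 0) \<and> (\<forall>k\<in>?K. blinfun_apply k w \<le> -1)" ..
        note w = conjunct1[OF w0] conjunct2[OF w0]
        have w': "\<forall>s\<in>span (\<Union>k\<in>I - {i}. Df k). blinfun_apply s (- w) = 0"
          using w(1) by (simp add: blinfun.minus_right)
        have "\<forall>\<phi>\<in>(\<lambda>\<psi>. - x i - \<psi>) ` Uf i. blinfun_apply \<phi> (- w) \<le> -1"
        proof
          fix \<phi> assume "\<phi> \<in> (\<lambda>\<psi>. - x i - \<psi>) ` Uf i"
          then obtain b where b: "b \<in> Uf i" "\<phi> = - x i - b" by auto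
          have "blinfun_apply (x i + b) w \<le> -1" using w(2) b(1) by auto
          then show "blinfun_apply \<phi> (- w) \<le> -1" using b(2)
            by (simp add: blinfun.minus_right blinfun.diff_left blinfun.minus_left blinfun.add_left)
        qed
        then have "supp ((\<lambda>\<psi>. - x i - \<psi>) ` Uf i) (- w) < 0" using qf[OF i] by (intro supp_lt_intro) auto
        moreover have "\<forall>k\<in>I - {i}. supp ((\<lambda>\<phi>. \<phi> + y k) ` Lf k) (- w) \<le> 0 \<and> supp ((\<lambda>\<psi>. - x k - \<psi>) ` Uf k) (- w) \<le> 0"
          using zeroF[of "I - {i}" x y "- w"] xy w' by blast
        ultimately show ?thesis by blast
      qed
      have Q3: "\<exists>v0. (\<forall>j\<in>J0. supp ((\<lambda>\<phi>. \<phi> + z j) ` Lg j) v0 < 0) \<and>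
              (\<forall>i\<in>I. supp ((\<lambda>\<phi>. \<phi> + y i) ` Lf i) v0 \<le> 0 \<and>
                      supp ((\<lambda>\<psi>. - x i - \<psi>) ` Uf i) v0 \<le> 0)"
      proof -
        let ?K = "convex hull (\<Union>j\<in>J0. (\<lambda>\<phi>. \<phi> + z j) ` Lg j)"
        have cK: "compactin wstar_topology ?K"
          using finJ0 qg by (intro W_hull_compact) (auto intro: cpt_tr cvx_tr)
        have sub: "?K \<subseteq> convex hull (\<Union>j\<in>J0. Dg j)"
          by (rule hull_mono) (use Dg_mem zz in auto)
        let ?C = "wstar_topology closure_of span (\<Union>i\<in>I. Df i)"
        have hB: "convex hull (\<Union>j\<in>J0. Dg j) \<inter> ?C = {}" using AB unfolding condB_def by blast
        from sub have "?K \<inter> ?C \<subseteq> convex hull (\<Union>j\<in>J0. Dg j) \<inter> ?C" by (rule Int_mono) simp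
        then have "?K \<inter> ?C = {}" by (simp only: hB subset_empty)
        then have "\<exists>w. (\<forall>s\<in>span (\<Union>i\<in>I. Df i). blinfun_apply s w = 0) \<and> (\<forall>k\<in>?K. blinfun_apply k w \<le> -1)"
          by (rule sep[OF cK convex_convex_hull])
        then obtain w where w0: "(\<forall>s\<in>span (\<Union>i\<in>I. Df i). blinfun_apply s w = 0) \<and> (\<forall>k\<in>?K. blinfun_apply k w \<le> -1)" ..
        note w = conjunct1[OF w0] conjunct2[OF w0]
        have "\<forall>j\<in>J0. supp ((\<lambda>\<phi>. \<phi> + z j) ` Lg j) w < 0"
        proof
          fix j assume j: "j \<in> J0"
          have "(\<lambda>\<phi>. \<phi> + z j) ` Lg j \<subseteq> ?K"
            by (rule order_trans[OF UN_upper[OF j] hull_subset])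
          then have "\<forall>\<phi>\<in>(\<lambda>\<phi>. \<phi> + z j) ` Lg j. blinfun_apply \<phi> w \<le> -1" using w(2) by blast
          moreover have "(\<lambda>\<phi>. \<phi> + z j) ` Lg j \<noteq> {}" using qg[OF j] by blast
          ultimately show "supp ((\<lambda>\<phi>. \<phi> + z j) ` Lg j) w < 0"
            by (intro supp_lt_intro)
        qed
        moreover have "\<forall>i\<in>I. supp ((\<lambda>\<phi>. \<phi> + y i) ` Lf i) w \<le> 0 \<and> supp ((\<lambda>\<psi>. - x i - \<psi>) ` Uf i) w \<le> 0"
          using zeroF[of I x y w] xy w(1) by blast
        ultimately show ?thesis by blast
      qed
      show "condQ x y z" unfolding condQ_def using Q1 Q2 Q3 by blast
    qed
  qed

  have PB: "(\<forall>i\<in>I. closedin wstar_topology (span (\<Union>k\<in>I - {i}. Df k))) \<and>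
         closedin wstar_topology (span (\<Union>i\<in>I. Df i)) \<longrightarrow> (QforAll \<longrightarrow> condA \<and> condB)"
  proof (intro impI)
    assume cl: "(\<forall>i\<in>I. closedin wstar_topology (span (\<Union>k\<in>I - {i}. Df k))) \<and>
         closedin wstar_topology (span (\<Union>i\<in>I. Df i))" and Q: QforAll
    have Qx: "condQ x y z" if "\<forall>i\<in>I. x i \<in> Lf i \<and> y i \<in> Uf i" "\<forall>j\<in>J0. z j \<in> Ug j" for x y z
      using Q that unfolding QforAll_def by blast
    define z0 where "z0 = (\<lambda>j. SOME c. c \<in> Ug j)"
    have z0: "\<forall>j\<in>J0. z0 j \<in> Ug j" unfolding z0_def using qg by (simp add: some_in_eq)
    have LUf: "\<forall>k\<in>A. convex (Lf k) \<and> convex (Uf k) \<and> Lf k \<noteq> {} \<and> Uf k \<noteq> {}" if "A \<subseteq> I" for A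
      using qf that by blast
    have fconv: "(\<forall>a\<in>Lf k. blinfun_apply (a + y k) w \<le> 0) \<and> (\<forall>b\<in>Uf k. blinfun_apply (- x k - b) w \<le> 0)"
      if k: "k \<in> I" and s1: "supp ((\<lambda>\<phi>. \<phi> + y k) ` Lf k) w \<le> 0" and s2: "supp ((\<lambda>\<psi>. - x k - \<psi>) ` Uf k) w \<le> 0"
      for k x y w
    proof -
      have "\<forall>\<phi>\<in>(\<lambda>\<phi>. \<phi> + y k) ` Lf k. blinfun_apply \<phi> w \<le> 0"
        using s1 qf[OF k] cpt_tr by (subst (asm) supp_le_iff) auto
      moreover have "\<forall>\<phi>\<in>(\<lambda>\<psi>. - x k - \<psi>) ` Uf k. blinfun_apply \<phi> w \<le> 0"
        using s2 qf[OF k] cpt_neg by (subst (asm) supp_le_iff) auto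
      ultimately show ?thesis by auto
    qed
    have cA: condA unfolding condA_def
    proof
      fix i assume i: "i \<in> I"
      have ceq: "wstar_topology closure_of span (\<Union>k\<in>I - {i}. Df k) = span (\<Union>k\<in>I - {i}. Df k)"
        using cl i by (simp add: closure_of_closedin)
      show "Df i \<inter> wstar_topology closure_of span (\<Union>k\<in>I - {i}. Df k) = {}"
      proof (rule ccontr)
        assume "Df i \<inter> wstar_topology closure_of span (\<Union>k\<in>I - {i}. Df k) \<noteq> {}"
        then obtain \<phi> where \<phi>: "\<phi> \<in> Df i" "\<phi> \<in> span (\<Union>k\<in>I - {i}. Df k)" unfolding ceq by blast
        obtain a b where ab: "a \<in> Lf i" "b \<in> Uf i" "\<phi> = a + b" using \<phi>(1) unfolding Df_def msum_def by blast
        have "\<phi> \<in> span (\<Union>k\<in>I - {i}. msum (Lf k) (Uf k))" using \<phi>(2) unfolding Df_def by simp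
        then obtain x0 y0 where xy0: "\<forall>k\<in>I - {i}. x0 k \<in> Lf k \<and> y0 k \<in> Uf k"
          and K: "\<And>w. (\<forall>k\<in>I - {i}. (\<forall>a\<in>Lf k. blinfun_apply (a + y0 k) w \<le> 0) \<and> (\<forall>b\<in>Uf k. blinfun_apply (- x0 k - b) w \<le> 0))
             \<Longrightarrow> blinfun_apply \<phi> w = 0"
          using kill[OF LUf[of "I - {i}"]] by blast
        define x where "x = x0(i := a)"
        define y where "y = y0(i := b)"
        have xy: "\<forall>k\<in>I. x k \<in> Lf k \<and> y k \<in> Uf k" using xy0 ab unfolding x_def y_def by auto
        have "condQ x y z0" by (rule Qx[OF xy z0])
        then obtain v where v1: "supp ((\<lambda>\<phi>. \<phi> + y i) ` Lf i) v < 0"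
          and v2: "\<forall>k\<in>I - {i}. supp ((\<lambda>\<phi>. \<phi> + y k) ` Lf k) v \<le> 0 \<and> supp ((\<lambda>\<psi>. - x k - \<psi>) ` Uf k) v \<le> 0"
          unfolding condQ_def using i by blast
        have "\<forall>k\<in>I - {i}. (\<forall>a\<in>Lf k. blinfun_apply (a + y0 k) v \<le> 0) \<and> (\<forall>b\<in>Uf k. blinfun_apply (- x0 k - b) v \<le> 0)"
        proof
          fix k assume k: "k \<in> I - {i}"
          then have xk: "x k = x0 k" and yk: "y k = y0 k" unfolding x_def y_def by auto
          have kI: "k \<in> I" using k by blast
          from v2 k have "supp ((\<lambda>\<phi>. \<phi> + y k) ` Lf k) v \<le> 0 \<and> supp ((\<lambda>\<psi>. - x k - \<psi>) ` Uf k) v \<le> 0"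
            by blast
          then have "supp ((\<lambda>\<phi>. \<phi> + y0 k) ` Lf k) v \<le> 0 \<and> supp ((\<lambda>\<psi>. - x0 k - \<psi>) ` Uf k) v \<le> 0"
            unfolding xk yk .
          then show "(\<forall>a\<in>Lf k. blinfun_apply (a + y0 k) v \<le> 0) \<and> (\<forall>b\<in>Uf k. blinfun_apply (- x0 k - b) v \<le> 0)"
            using fconv[OF kI] by blast
        qed
        then have "blinfun_apply \<phi> v = 0" by (rule K)
        moreover have "blinfun_apply (a + y i) v < 0"
          using qf[OF i] ab(1) v1 by (intro supp_ltD[of "(\<lambda>\<phi>. \<phi> + y i) ` Lf i"]) (auto intro: cpt_tr)
        moreover have "y i = b" unfolding y_def by simp
        ultimately show False using ab(3) by simp
      qed
    qed
    have cB: condB unfolding condB_def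
    proof (rule ccontr)
      have ceq: "wstar_topology closure_of span (\<Union>i\<in>I. Df i) = span (\<Union>i\<in>I. Df i)"
        using cl by (simp add: closure_of_closedin)
      assume "convex hull (\<Union>j\<in>J0. Dg j) \<inter> wstar_topology closure_of span (\<Union>i\<in>I. Df i) \<noteq> {}"
      then obtain q where q: "q \<in> convex hull (\<Union>j\<in>J0. Dg j)" "q \<in> span (\<Union>i\<in>I. Df i)" unfolding ceq by blast
      have "convex hull (\<Union>j\<in>J0. Dg j) =
        {sum (\<lambda>i. c i *\<^sub>R s i) J0 | c s. (\<forall>i\<in>J0. c i \<ge> 0) \<and> sum c J0 = 1 \<and> (\<forall>i\<in>J0. s i \<in> Dg i)}"
        by (rule convex_hull_finite_union[OF finJ0]) (use Dg_cvx in blast)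
      then obtain \<mu> s where mus: "q = sum (\<lambda>i. \<mu> i *\<^sub>R s i) J0" "\<forall>i\<in>J0. \<mu> i \<ge> 0" "sum \<mu> J0 = 1" "\<forall>i\<in>J0. s i \<in> Dg i"
        using q(1) by blast
      have "\<forall>j\<in>J0. \<exists>c d. c \<in> Lg j \<and> d \<in> Ug j \<and> s j = c + d" using mus(4) unfolding Dg_def msum_def by blast
      then obtain c d where cd: "\<And>j. j \<in> J0 \<Longrightarrow> c j \<in> Lg j \<and> d j \<in> Ug j \<and> s j = c j + d j" by metis
      have "q \<in> span (\<Union>i\<in>I. msum (Lf i) (Uf i))" using q(2) unfolding Df_def by simp
      then obtain x y where xy: "\<forall>k\<in>I. x k \<in> Lf k \<and> y k \<in> Uf k"
        and K: "\<And>w. (\<forall>k\<in>I. (\<forall>a\<in>Lf k. blinfun_apply (a + y k) w \<le> 0) \<and> (\<forall>b\<in>Uf k. blinfun_apply (- x k - b) w \<le> 0))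
             \<Longrightarrow> blinfun_apply q w = 0"
        using kill[OF LUf[of I]] by blast
      have "\<forall>j\<in>J0. d j \<in> Ug j" using cd by blast
      then have "condQ x y d" by (rule Qx[OF xy])
      then have "\<exists>v0. (\<forall>j\<in>J0. supp ((\<lambda>\<phi>. \<phi> + d j) ` Lg j) v0 < 0) \<and>
        (\<forall>i\<in>I. supp ((\<lambda>\<phi>. \<phi> + y i) ` Lf i) v0 \<le> 0 \<and> supp ((\<lambda>\<psi>. - x i - \<psi>) ` Uf i) v0 \<le> 0)"
        unfolding condQ_def by (elim conjE) assumption
      then obtain v0 where v0: "(\<forall>j\<in>J0. supp ((\<lambda>\<phi>. \<phi> + d j) ` Lg j) v0 < 0) \<and>
        (\<forall>i\<in>I. supp ((\<lambda>\<phi>. \<phi> + y i) ` Lf i) v0 \<le> 0 \<and> supp ((\<lambda>\<psi>. - x i - \<psi>) ` Uf i) v0 \<le> 0)" ..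
      note v1 = conjunct1[OF v0] and v2 = conjunct2[OF v0]
      have "\<forall>k\<in>I. (\<forall>a\<in>Lf k. blinfun_apply (a + y k) v0 \<le> 0) \<and> (\<forall>b\<in>Uf k. blinfun_apply (- x k - b) v0 \<le> 0)"
      proof
        fix k assume k: "k \<in> I"
        show "(\<forall>a\<in>Lf k. blinfun_apply (a + y k) v0 \<le> 0) \<and> (\<forall>b\<in>Uf k. blinfun_apply (- x k - b) v0 \<le> 0)"
          by (rule fconv[where k=k and x=x and y=y and w=v0, OF k conjunct1[OF v2[rule_format, OF k]] conjunct2[OF v2[rule_format, OF k]]])
      qed
      then have "blinfun_apply q v0 = 0" by (rule K)
      moreover have "blinfun_apply q v0 < 0"
      proof -
        have neg: "\<forall>j\<in>J0. blinfun_apply (s j) v0 < 0"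
        proof
          fix j assume j: "j \<in> J0"
          show "blinfun_apply (s j) v0 < 0"
            using qg[OF j] cd[OF j] v1 j by (intro supp_ltD[of "(\<lambda>\<phi>. \<phi> + d j) ` Lg j"]) (auto intro: cpt_tr)
        qed
        have "blinfun_apply q v0 = (\<Sum>j\<in>J0. \<mu> j * blinfun_apply (s j) v0)"
          unfolding mus(1) by (simp add: blinfun.sum_left blinfun.scaleR_left)
        also have "\<dots> < 0" using sum_neg[OF finJ0 mus(2,3) neg] .
        finally show ?thesis .
      qed
      ultimately show False by simp
    qed
    show "condA \<and> condB" using cA cB by blast
  qed

  have PC: "(\<forall>i\<in>I. closedin wstar_topology (span (\<Union>k\<in>I - {i}. Df k))) \<longrightarrow> (condA \<and> condB \<longleftrightarrow> MFCQ)"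
  proof (intro impI iffI)
    assume cl: "\<forall>i\<in>I. closedin wstar_topology (span (\<Union>k\<in>I - {i}. Df k))"
    {
      assume AB: "condA \<and> condB"
      have m1: "\<forall>i\<in>I. Df i \<inter> span (\<Union>k\<in>I - {i}. Df k) = {}"
      proof
        fix i assume i: "i \<in> I"
        have "span (\<Union>k\<in>I - {i}. Df k) \<subseteq> wstar_topology closure_of span (\<Union>k\<in>I - {i}. Df k)"
          by (rule closure_of_subset) simp
        moreover have "Df i \<inter> wstar_topology closure_of span (\<Union>k\<in>I - {i}. Df k) = {}"
          using AB i unfolding condA_def by blast
        ultimately show "Df i \<inter> span (\<Union>k\<in>I - {i}. Df k) = {}" by blast
      qed
      let ?K = "convex hull (\<Union>j\<in>J0. Dg j)"
      have cK: "compactin wstar_topology ?K" using finJ0 Dg_cvx by (intro W_hull_compact) auto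
      have "?K \<inter> (wstar_topology closure_of span (\<Union>i\<in>I. Df i)) = {}" using AB unfolding condB_def by blast
      then have "\<exists>w. (\<forall>s\<in>span (\<Union>i\<in>I. Df i). blinfun_apply s w = 0) \<and> (\<forall>k\<in>?K. blinfun_apply k w \<le> -1)"
        by (rule sep[OF cK convex_convex_hull])
      then obtain w where w0: "(\<forall>s\<in>span (\<Union>i\<in>I. Df i). blinfun_apply s w = 0) \<and> (\<forall>k\<in>?K. blinfun_apply k w \<le> -1)" ..
      note w = conjunct1[OF w0] conjunct2[OF w0]
      have "\<forall>i\<in>I. \<forall>\<phi>\<in>Df i. blinfun_apply \<phi> w = 0" using w(1) span_superset by blast
      moreover have "\<forall>j\<in>J0. \<forall>\<phi>\<in>Dg j. blinfun_apply \<phi> w < 0"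
      proof (intro ballI)
        fix j \<phi> assume j: "j \<in> J0" and \<phi>: "\<phi> \<in> Dg j"
        have "Dg j \<subseteq> ?K" by (rule order_trans[OF UN_upper[OF j] hull_subset])
        then have "blinfun_apply \<phi> w \<le> -1" using w(2) \<phi> by blast
        then show "blinfun_apply \<phi> w < 0" by simp
      qed
      ultimately show MFCQ unfolding MFCQ_def using m1 by blast
    }
    {
      assume M: MFCQ
      have cA: condA unfolding condA_def
      proof
        fix i assume i: "i \<in> I"
        show "Df i \<inter> wstar_topology closure_of span (\<Union>k\<in>I - {i}. Df k) = {}"
          using M cl i unfolding MFCQ_def by (simp add: closure_of_closedin)
      qed
      obtain v0 where v0: "\<forall>i\<in>I. \<forall>\<phi>\<in>Df i. blinfun_apply \<phi> v0 = 0" "\<forall>j\<in>J0. \<forall>\<phi>\<in>Dg j. blinfun_apply \<phi> v0 < 0"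
        using M unfolding MFCQ_def by blast
      have sZ: "subspace {\<phi>::'a \<Rightarrow>\<^sub>L real. blinfun_apply \<phi> v0 = 0}"
        unfolding subspace_def by (simp add: blinfun.zero_left blinfun.add_left blinfun.scaleR_left)
      have "span (\<Union>i\<in>I. Df i) \<subseteq> {\<phi>. blinfun_apply \<phi> v0 = 0}"
        by (rule span_minimal) (use v0(1) sZ in auto)
      then have Z: "wstar_topology closure_of span (\<Union>i\<in>I. Df i) \<subseteq> {\<phi>. blinfun_apply \<phi> v0 = 0}"
        by (rule closure_of_minimal) (rule W_closed_ker)
      have cN: "convex {\<phi>::'a \<Rightarrow>\<^sub>L real. blinfun_apply \<phi> v0 < 0}"
      proof (rule convexI)
        fix a b :: "'a \<Rightarrow>\<^sub>L real" and u v :: real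
        assume ab: "a \<in> {\<phi>. blinfun_apply \<phi> v0 < 0}" "b \<in> {\<phi>. blinfun_apply \<phi> v0 < 0}"
          and uv: "0 \<le> u" "0 \<le> v" "u + v = 1"
        have "u * blinfun_apply a v0 + v * blinfun_apply b v0 < 0"
        proof (cases "u = 0")
          case True then show ?thesis using ab uv by simp
        next
          case False
          then have "u * blinfun_apply a v0 < 0" using ab uv by (simp add: mult_pos_neg)
          moreover have "v * blinfun_apply b v0 \<le> 0" using ab uv by (simp add: mult_nonneg_nonpos)
          ultimately show ?thesis by linarith
        qed
        then show "u *\<^sub>R a + v *\<^sub>R b \<in> {\<phi>. blinfun_apply \<phi> v0 < 0}"
          by (simp add: blinfun.add_left blinfun.scaleR_left)
      qed
      have "convex hull (\<Union>j\<in>J0. Dg j) \<subseteq> {\<phi>. blinfun_apply \<phi> v0 < 0}"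
        by (rule hull_minimal) (use v0(2) cN in auto)
      then have cB: condB unfolding condB_def using Z by fastforce
      show "condA \<and> condB" using cA cB by blast
    }
  qed
  show ?thesis using PA PB PC by blast
qed

end
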